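(* For every $t\ge0$, every $\alpha\ge1$ and every $f\in F_0(G)$, the interacting particle system started from $f$ satisfies $\mathbb E_f\|f_t\|_\alpha^\alpha<\infty$.
   Context: A graph is a quadruple $G=(V,E,K,m)$: $V$ is a finite or countable set of nodes, which are elements of a real Hilbert space $\mathcal H$ with inner product "$\cdot$" and norm $|\cdot|$; $E$ is a set of undirected edges (at most one edge between any two distinct nodes, no self-loops); the edge between $x$ and $y$ is written $\langle x,y\rangle=\langle y,x\rangle$, and $y\sim x$ means this edge exists; $K=(k_{xy})_{x,y\in V}$ with $k_{xy}=k_{yx}\ge0$ and $k_{xy}=0$ if there is no edge; $m=(m_x)_{x\in V}$ with $m_x>0$. Let $e_{xy}=(y-x)/|y-x|$. Assume $d_0=\sup_{x\in V}\#\{y:y\sim x\}<\infty$, set $d=\max\{d_0,2\}$, and assume $M=\max\{\sup_{x\in V}m_x^{-1},\sup_{\langle x,y\rangle\in E}k_{xy}\}<\infty$. $V=V_0\cup V_1$ is a fixed partition into disjoint sets. $F(G)$ is the set of functions $f$ assigning a real number $f(x)$ to each $x\in V$ and a vector $f(\langle x,y\rangle)\in\mathcal H$ that is a real multiple of $y-x$ to each edge. For $1\le\alpha<\infty$, $\|f\|_\alpha=\big(\sum_{x\in V}|f(x)|^\alpha/m_x+\sum_{\langle x,y\rangle\in E}k_{xy}|f(\langle x,y\rangle)|^\alpha\big)^{1/\alpha}$, and $\|f\|_\infty=\max\{\sup_x|f(x)|,\sup_{\langle x,y\rangle}|f(\langle x,y\rangle)|\}$. $F_0(G)$ is the set of $f\in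 F(G)$ with finitely many nonzero values such that $|f(x)|\in\mathbb Z$ and $|f(\langle x,y\rangle)|\in\mathbb Z$ for all nodes and edges. The interacting particle system (IPS) $(f_t)_{t\ge0}$ is the continuous-time Markov jump process on $F_0(G)$ with the following transitions from state $f$: (i) for each $x\in V$, at rate $|f(x)|/m_x$, for every $y\sim x$ the edge value $f(\langle x,y\rangle)$ is replaced by $f(\langle x,y\rangle)+\mathrm{sgn}(f(x))\,e_{yx}$ (all other values unchanged); (ii) for each edge $\langle x,y\rangle$, at rate $k_{xy}|f(\langle x,y\rangle)|$, with $s=\mathrm{sgn}(f(\langle x,y\rangle)\cdot e_{xy})$, the value $f(x)$ is replaced by $f(x)+s$ if $x\in V_0$ and $f(y)$ by $f(y)-s$ if $y\in V_0$ (values at nodes of $V_1$ never change; this rule is symmetric in $x,y$). $P_f,\mathbb E_f$ denote probability and expectation given $f_0=f$. $\tau_0=0$, $\tau_n$ is the time of the $n$-th jump, $\xi_n=\tau_n-\tau_{n-1}$, $h_n=f_{\tau_n}$, and $\eta_t=\sup\{n:\tau_n\le t\}$. *)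

theory Defs
  imports "HOL-Probability.Probability"
begin

text \<open>A state of the IPS: node values (extended by 0 outside V) and edge values
  indexed by unordered edges, i.e. doubleton sets {x,y} (extended by 0 outside E).\<close>
type_synonym 'h state = "('h \<Rightarrow> real) \<times> ('h set \<Rightarrow> 'h)"

type_synonym 'h event = "'h + 'h set"

definition other :: "'h set \<Rightarrow> 'h \<Rightarrow> 'h" where
  "other e z = (THE w. e = {z, w})"

text \<open>k on an unordered edge e = {x,y}: k x y (well defined since k is symmetric).\<close>
definition edge_weight :: "('h \<Rightarrow> 'h \<Rightarrow> real) \<Rightarrow> 'h set \<Rightarrow> real" where
  "edge_weight k e = (let z = (SOME z. z \<in> e) in k z (other e z))"

definition F0 :: "'h::real_inner set \<Rightarrow> 'h set set \<Rightarrow> 'h state set" where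
  "F0 V E = {(a, b).
      (\<forall>x. x \<notin> V \<longrightarrow> a x = 0) \<and> (\<forall>e. e \<notin> E \<longrightarrow> b e = 0)
    \<and> (\<forall>x y. {x, y} \<in> E \<longrightarrow> (\<exists>c. b {x, y} = c *\<^sub>R (y - x)))
    \<and> finite {x. a x \<noteq> 0} \<and> finite {e. b e \<noteq> 0}
    \<and> (\<forall>x. \<bar>a x\<bar> \<in> \<int>) \<and> (\<forall>e. norm (b e) \<in> \<int>)}"

definition normpow :: "'h set \<Rightarrow> 'h set set \<Rightarrow> ('h \<Rightarrow> real) \<Rightarrow> ('h \<Rightarrow> 'h \<Rightarrow> real)
    \<Rightarrow> real \<Rightarrow> 'h::real_normed_vector state \<Rightarrow> real" where
  "normpow V E m k \<alpha> g =
     (\<Sum>x\<in>{x\<in>V. fst g x \<noteq> 0}. \<bar>fst g x\<bar> powr \<alpha> / m x)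
   + (\<Sum>e\<in>{e\<in>E. snd g e \<noteq> 0}. edge_weight k e * norm (snd g e) powr \<alpha>)"

definition rate :: "('h \<Rightarrow> real) \<Rightarrow> ('h \<Rightarrow> 'h \<Rightarrow> real) \<Rightarrow> 'h::real_normed_vector state
    \<Rightarrow> 'h event \<Rightarrow> real" where
  "rate m k g evt = (case evt of
       Inl x \<Rightarrow> \<bar>fst g x\<bar> / m x
     | Inr e \<Rightarrow> edge_weight k e * norm (snd g e))"

definition node_jump :: "'h set set \<Rightarrow> 'h::real_normed_vector state \<Rightarrow> 'h \<Rightarrow> 'h state" where
  "node_jump E g x = (fst g, \<lambda>e. if e \<in> E \<and> x \<in> e
       then snd g e + sgn (fst g x) *\<^sub>R ((x - other e x) /\<^sub>R norm (x - other e x))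
       else snd g e)"

text \<open>Transition (ii) at e = {x,y}: with s = sgn(f(e) \<bullet> e_xy), f(x) := f(x) + s if x \<in> V0 and
  f(y) := f(y) - s if y \<in> V0. Written symmetrically: endpoint z with other endpoint w
  gets sgn(f(e) \<bullet> (w - z)) added (sign of the dot product with e_zw).\<close>
definition edge_jump :: "'h set \<Rightarrow> 'h::real_inner state \<Rightarrow> 'h set \<Rightarrow> 'h state" where
  "edge_jump V0 g e = (\<lambda>z. if z \<in> e \<and> z \<in> V0
       then fst g z + sgn (snd g e \<bullet> (other e z - z)) else fst g z, snd g)"

definition jump :: "'h set \<Rightarrow> 'h set set \<Rightarrow> 'h::real_inner state \<Rightarrow> 'h event \<Rightarrow> 'h state" where
  "jump V0 E g evt = (case evt of Inl x \<Rightarrow> node_jump E g x | Inr e \<Rightarrow> edge_jump V0 g e)"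

text \<open>One step of the jump process, driven by unit-rate exponential clocks c (one per
  possible transition; competing-clocks construction): the transition with the smallest
  clock c/rate fires; the holding time is that minimum (\<infinity> if all rates vanish).\<close>
definition step :: "('h \<Rightarrow> real) \<Rightarrow> ('h \<Rightarrow> 'h \<Rightarrow> real) \<Rightarrow> 'h set \<Rightarrow> 'h set set
    \<Rightarrow> 'h::real_inner state \<Rightarrow> ('h event \<Rightarrow> real) \<Rightarrow> 'h state \<times> ereal" where
  "step m k V0 E g c = (let A = {evt. 0 < rate m k g evt} in
     if A = {} then (g, \<infinity>)
     else let evt = arg_min_on (\<lambda>evt. c evt / rate m k g evt) A
          in (jump V0 E g evt, ereal (c evt / rate m k g evt)))"

primrec jchain :: "('h \<Rightarrow> real) \<Rightarrow> ('h \<Rightarrow> 'h \<Rightarrow> real) \<Rightarrow> 'h set \<Rightarrow> 'h set set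
    \<Rightarrow> 'h::real_inner state \<Rightarrow> (nat \<times> 'h event \<Rightarrow> real) \<Rightarrow> nat \<Rightarrow> 'h state \<times> ereal" where
  "jchain m k V0 E f \<omega> 0 = (f, 0)"
| "jchain m k V0 E f \<omega> (Suc n) =
     (let (g, \<tau>) = jchain m k V0 E f \<omega> n;
          (g', \<xi>) = step m k V0 E g (\<lambda>evt. \<omega> (n, evt))
      in (g', \<tau> + \<xi>))"

text \<open>f_t = h_{\<eta>_t} with \<eta>_t = sup {n. \<tau>_n \<le> t}; None if \<eta>_t = \<infinity> (explosion before t).\<close>
definition ips_state :: "('h \<Rightarrow> real) \<Rightarrow> ('h \<Rightarrow> 'h \<Rightarrow> real) \<Rightarrow> 'h set \<Rightarrow> 'h set set
    \<Rightarrow> 'h::real_inner state \<Rightarrow> (nat \<times> 'h event \<Rightarrow> real) \<Rightarrow> real \<Rightarrow> 'h state option" where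
  "ips_state m k V0 E f \<omega> t =
     (let N = {n. snd (jchain m k V0 E f \<omega> n) \<le> ereal t}
      in if finite N then Some (fst (jchain m k V0 E f \<omega> (Max N))) else None)"

definition clock_space :: "(nat \<times> 'h event \<Rightarrow> real) measure" where
  "clock_space = PiM UNIV (\<lambda>_. density lborel (exponential_density 1))"

definition expected_normpow :: "'h set \<Rightarrow> 'h set set \<Rightarrow> ('h \<Rightarrow> real) \<Rightarrow> ('h \<Rightarrow> 'h \<Rightarrow> real)
    \<Rightarrow> 'h set \<Rightarrow> real \<Rightarrow> 'h::real_inner state \<Rightarrow> real \<Rightarrow> ennreal" where
  "expected_normpow V E m k V0 \<alpha> f t =
     (\<integral>\<^sup>+ \<omega>. (case ips_state m k V0 E f \<omega> t of
                 None \<Rightarrow> \<infinity>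
               | Some g \<Rightarrow> ennreal (normpow V E m k \<alpha> g)) \<partial>clock_space)"

end

theory Submission
  imports Defs
begin

lemma other_dbl: "x \<noteq> y \<Longrightarrow> other {x, y} x = y"
  unfolding other_def by (rule the_equality) (auto simp: doubleton_eq_iff)

lemma edge_weight_dbl:
  assumes "x \<noteq> y"
  shows "edge_weight k {x, y} = k x y \<or> edge_weight k {x, y} = k y x"
proof -
  define z where "z = (SOME z. z \<in> {x, y})"
  have "z \<in> {x, y}" unfolding z_def by (rule someI) auto
  moreover have "other {x, y} y = x" using other_dbl[of y x] assms by (simp add: insert_commute)
  ultimately show ?thesis using other_dbl[OF assms]
    unfolding edge_weight_def z_def[symmetric] Let_def by auto
qed

lemma norm_unit_le: "norm ((v::'a::real_normed_vector) /\<^sub>R norm v) \<le> 1"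
  by (metis norm_sgn order_refl sgn_div_norm zero_less_one order_less_imp_le)

locale ips =
  fixes V V0 :: "'h::{real_inner, complete_space} set" and E :: "'h set set"
    and k :: "'h \<Rightarrow> 'h \<Rightarrow> real" and m :: "'h \<Rightarrow> real" and D :: nat and M :: real
  assumes E_edges: "E \<subseteq> {{x, y} | x y. x \<in> V \<and> y \<in> V \<and> x \<noteq> y}"
    and k_nonneg: "\<And>x y. 0 \<le> k x y"
    and m_pos: "\<And>x. x\<in>V \<Longrightarrow> 0 < m x"
    and deg: "\<And>x. x\<in>V \<Longrightarrow> finite {y. {x, y} \<in> E} \<and> card {y. {x, y} \<in> E} \<le> D"
    and Mm: "\<And>x. x\<in>V \<Longrightarrow> 1 / m x \<le> M"
    and Mk: "\<And>x y. {x, y} \<in> E \<Longrightarrow> k x y \<le> M"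
    and M_pos: "0 < M"
    and V0V: "V0 \<subseteq> V"
begin

definition ok :: "'h state \<Rightarrow> bool" where
  "ok g \<longleftrightarrow> finite {x. fst g x \<noteq> 0} \<and> finite {e. snd g e \<noteq> 0}
     \<and> (\<forall>x. x \<notin> V \<longrightarrow> fst g x = 0) \<and> (\<forall>e. e \<notin> E \<longrightarrow> snd g e = 0)"

definition Sz :: "'h state \<Rightarrow> real" where
  "Sz g = (\<Sum>x\<in>{x. fst g x \<noteq> 0}. \<bar>fst g x\<bar>) + (\<Sum>e\<in>{e. snd g e \<noteq> 0}. norm (snd g e))"

definition Ev :: "'h state \<Rightarrow> 'h event set" where
  "Ev g = {evt. 0 < rate m k g evt}"

definition Rt :: "'h state \<Rightarrow> real" where
  "Rt g = (\<Sum>evt\<in>Ev g. rate m k g evt)"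

lemma E_dbl: "e \<in> E \<Longrightarrow> \<exists>x y. e = {x, y} \<and> x \<in> V \<and> y \<in> V \<and> x \<noteq> y"
  using E_edges by blast

lemma ew_bounds: assumes "e \<in> E" shows "0 \<le> edge_weight k e" "edge_weight k e \<le> M"
proof -
  obtain x y where e: "e = {x, y}" "x \<noteq> y" using E_dbl[OF assms] by blast
  have "{y, x} \<in> E" using assms e by (simp add: insert_commute)
  then show "0 \<le> edge_weight k e" "edge_weight k e \<le> M"
    using edge_weight_dbl[OF e(2), of k] e assms k_nonneg Mk by auto
qed

lemma Sz_nonneg: "0 \<le> Sz g"
  unfolding Sz_def by (intro add_nonneg_nonneg sum_nonneg) auto

lemma Ev_sub: assumes "ok g"
  shows "Ev g \<subseteq> Inl ` {x. fst g x \<noteq> 0} \<union> Inr ` {e. snd g e \<noteq> 0}"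
proof
  fix evt assume "evt \<in> Ev g"
  then have r: "0 < rate m k g evt" by (simp add: Ev_def)
  show "evt \<in> Inl ` {x. fst g x \<noteq> 0} \<union> Inr ` {e. snd g e \<noteq> 0}"
  proof (cases evt)
    case (Inl x) then show ?thesis using r by (auto simp: rate_def)
  next
    case (Inr e) then show ?thesis using r by (auto simp: rate_def)
  qed
qed

lemma Ev_finite: "ok g \<Longrightarrow> finite (Ev g)"
  using Ev_sub by (rule finite_subset) (auto simp: ok_def)

lemma Rt_nonneg: "0 \<le> Rt g"
  unfolding Rt_def Ev_def by (intro sum_nonneg) auto

lemma Rt_le: assumes g: "ok g" shows "Rt g \<le> M * Sz g"
proof -
  define bnd where "bnd evt = (case evt of Inl x \<Rightarrow> M * \<bar>fst g x\<bar> | Inr e \<Rightarrow> M * norm (snd g e))" for evt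
  let ?Sa = "{x. fst g x \<noteq> 0}" and ?Sb = "{e. snd g e \<noteq> 0}"
  have fin: "finite ?Sa" "finite ?Sb" using g by (auto simp: ok_def)
  have "Rt g \<le> (\<Sum>evt\<in>Ev g. bnd evt)"
    unfolding Rt_def
  proof (rule sum_mono)
    fix evt assume "evt \<in> Ev g"
    then have r: "0 < rate m k g evt" by (simp add: Ev_def)
    show "rate m k g evt \<le> bnd evt"
    proof (cases evt)
      case (Inl x)
      then have "fst g x \<noteq> 0" using r by (auto simp: rate_def)
      then have "x \<in> V" using g by (auto simp: ok_def)
      then have "0 < m x" "1 / m x \<le> M" using m_pos Mm by auto
      then have "\<bar>fst g x\<bar> * (1 / m x) \<le> \<bar>fst g x\<bar> * M" by (intro mult_left_mono) auto
      then show ?thesis using Inl by (simp add: rate_def bnd_def mult.commute)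
    next
      case (Inr e)
      then have "snd g e \<noteq> 0" using r by (auto simp: rate_def)
      then have "e \<in> E" using g by (auto simp: ok_def)
      then have "edge_weight k e * norm (snd g e) \<le> M * norm (snd g e)"
        using ew_bounds by (intro mult_right_mono) auto
      then show ?thesis using Inr by (simp add: rate_def bnd_def)
    qed
  qed
  also have "\<dots> \<le> (\<Sum>evt\<in>Inl ` ?Sa \<union> Inr ` ?Sb. bnd evt)"
    using Ev_sub[OF g] fin M_pos
    by (intro sum_mono2) (auto simp: bnd_def split: sum.split)
  also have "\<dots> = (\<Sum>evt\<in>Inl ` ?Sa. bnd evt) + (\<Sum>evt\<in>Inr ` ?Sb. bnd evt)"
    using fin by (intro sum.union_disjoint) auto
  also have "\<dots> = M * Sz g"
    by (simp add: sum.reindex bnd_def Sz_def sum_distrib_left distrib_left)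
  finally show ?thesis .
qed

lemma sum_supp_eq:
  assumes "finite T" "{x. f x \<noteq> 0} \<subseteq> T" "h 0 = (0::real)"
  shows "(\<Sum>x\<in>{x. f x \<noteq> 0}. h (f x)) = (\<Sum>x\<in>T. h (f x))"
  using assms by (intro sum.mono_neutral_left) auto

lemma jump_ok_Sz:
  assumes g: "ok g" and evt: "evt \<in> Ev g"
  shows "ok (jump V0 E g evt) \<and> Sz (jump V0 E g evt) \<le> Sz g + real (D + 2)"
proof -
  let ?Sa = "{x. fst g x \<noteq> 0}" and ?Sb = "{e. snd g e \<noteq> 0}"
  have fin: "finite ?Sa" "finite ?Sb" using g by (auto simp: ok_def)
  have r: "0 < rate m k g evt" using evt by (simp add: Ev_def)
  show ?thesis
  proof (cases evt)
    case (Inl x)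
    then have ax: "fst g x \<noteq> 0" using r by (auto simp: rate_def)
    then have xV: "x \<in> V" using g by (auto simp: ok_def)
    define Ex where "Ex = {e\<in>E. x \<in> e}"
    have Exsub: "Ex \<subseteq> (\<lambda>y. {x, y}) ` {y. {x, y} \<in> E}"
    proof
      fix e assume "e \<in> Ex"
      then have "e \<in> E" "x \<in> e" by (auto simp: Ex_def)
      then obtain u v where "e = {u, v}" using E_dbl by blast
      with \<open>x \<in> e\<close> \<open>e \<in> E\<close> show "e \<in> (\<lambda>y. {x, y}) ` {y. {x, y} \<in> E}"
        by (auto simp: insert_commute)
    qed
    have finEx: "finite Ex" using deg[OF xV] by (intro finite_subset[OF Exsub]) auto
    have "card Ex \<le> card ((\<lambda>y. {x, y}) ` {y. {x, y} \<in> E})"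
      by (rule card_mono[OF _ Exsub]) (use deg[OF xV] in auto)
    also have "\<dots> \<le> card {y. {x, y} \<in> E}"
      by (rule card_image_le) (use deg[OF xV] in auto)
    also have "\<dots> \<le> D" using deg[OF xV] by auto
    finally have cardEx: "card Ex \<le> D" .
    define b' where "b' e = (if e \<in> E \<and> x \<in> e
       then snd g e + sgn (fst g x) *\<^sub>R ((x - other e x) /\<^sub>R norm (x - other e x)) else snd g e)" for e
    have J: "jump V0 E g evt = (fst g, b')" using Inl unfolding jump_def node_jump_def b'_def[abs_def] by simp
    have supp: "{e. b' e \<noteq> 0} \<subseteq> ?Sb \<union> Ex" by (auto simp: b'_def Ex_def)
    have f1: "finite {e. b' e \<noteq> 0}" using supp fin finEx by (meson finite_Un finite_subset)
    have f2: "\<forall>e. e \<notin> E \<longrightarrow> b' e = 0" using g by (simp add: b'_def ok_def)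
    have okJ: "ok (jump V0 E g evt)" using g f1 f2 unfolding J ok_def by simp
    have nb: "norm (b' e) \<le> norm (snd g e) + (if e \<in> Ex then 1 else 0)" for e
    proof (cases "e \<in> E \<and> x \<in> e")
      case True
      define u where "u = sgn (fst g x) *\<^sub>R ((x - other e x) /\<^sub>R norm (x - other e x))"
      have nu: "norm u \<le> 1"
      proof -
        have "norm u = \<bar>sgn (fst g x)\<bar> * norm ((x - other e x) /\<^sub>R norm (x - other e x))"
          unfolding u_def by (rule norm_scaleR)
        also have "\<dots> \<le> 1 * 1" using norm_unit_le[of "x - other e x"]
          by (intro mult_mono) (auto simp: abs_sgn_eq)
        finally show ?thesis by simp
      qed
      have "b' e = snd g e + u" using True by (simp add: b'_def u_def)
      then have "norm (b' e) \<le> norm (snd g e) + norm u" by (simp add: norm_triangle_ineq)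
      moreover have "e \<in> Ex" using True by (simp add: Ex_def)
      ultimately show ?thesis using nu by simp
    qed (auto simp: b'_def Ex_def)
    have "(\<Sum>e\<in>{e. b' e \<noteq> 0}. norm (b' e)) = (\<Sum>e\<in>?Sb \<union> Ex. norm (b' e))"
      using fin finEx supp by (intro sum_supp_eq) auto
    also have "\<dots> \<le> (\<Sum>e\<in>?Sb \<union> Ex. norm (snd g e) + (if e \<in> Ex then 1 else 0))"
      by (intro sum_mono nb)
    also have "\<dots> = (\<Sum>e\<in>?Sb \<union> Ex. norm (snd g e)) + (\<Sum>e\<in>?Sb \<union> Ex. (if e \<in> Ex then 1 else 0))"
      by (rule sum.distrib)
    also have "(\<Sum>e\<in>?Sb \<union> Ex. (if e \<in> Ex then 1 else 0)) = (\<Sum>e\<in>{e\<in>?Sb \<union> Ex. e \<in> Ex}. (1::real))"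
      using fin finEx by (intro sum.inter_filter[symmetric]) auto
    also have "{e\<in>?Sb \<union> Ex. e \<in> Ex} = Ex" by blast
    also have "(\<Sum>e\<in>?Sb \<union> Ex. norm (snd g e)) = (\<Sum>e\<in>?Sb. norm (snd g e))"
      using fin finEx by (intro sum_supp_eq[symmetric]) auto
    finally have "(\<Sum>e\<in>{e. b' e \<noteq> 0}. norm (b' e)) \<le> (\<Sum>e\<in>?Sb. norm (snd g e)) + real D"
      using cardEx by (simp add: add_mono)
    then have "Sz (jump V0 E g evt) \<le> Sz g + real D" unfolding J Sz_def by simp
    with okJ show ?thesis by simp
  next
    case (Inr e)
    then have be: "snd g e \<noteq> 0" using r by (auto simp: rate_def)
    then have eE: "e \<in> E" using g by (auto simp: ok_def)
    then obtain u v where e: "e = {u, v}" using E_dbl by blast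
    have fine: "finite e" and carde: "card e \<le> 2" using e by (auto simp: card_insert_le_m1)
    define a' where "a' z = (if z \<in> e \<and> z \<in> V0
       then fst g z + sgn (snd g e \<bullet> (other e z - z)) else fst g z)" for z
    have J: "jump V0 E g evt = (a', snd g)" using Inr unfolding jump_def edge_jump_def a'_def[abs_def] by simp
    have supp: "{z. a' z \<noteq> 0} \<subseteq> ?Sa \<union> e" by (auto simp: a'_def)
    have f1: "finite {z. a' z \<noteq> 0}" using supp fin fine by (meson finite_Un finite_subset)
    have f2: "\<forall>z. z \<notin> V \<longrightarrow> a' z = 0" using g V0V by (auto simp: a'_def ok_def)
    have okJ: "ok (jump V0 E g evt)" using g f1 f2 unfolding J ok_def by simp
    have na: "\<bar>a' z\<bar> \<le> \<bar>fst g z\<bar> + (if z \<in> e then 1 else 0)" for z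
      by (auto simp: a'_def sgn_real_def)
    have "(\<Sum>z\<in>{z. a' z \<noteq> 0}. \<bar>a' z\<bar>) = (\<Sum>z\<in>?Sa \<union> e. \<bar>a' z\<bar>)"
      using fin fine supp by (intro sum_supp_eq) auto
    also have "\<dots> \<le> (\<Sum>z\<in>?Sa \<union> e. \<bar>fst g z\<bar> + (if z \<in> e then 1 else 0))"
      by (intro sum_mono na)
    also have "\<dots> = (\<Sum>z\<in>?Sa \<union> e. \<bar>fst g z\<bar>) + (\<Sum>z\<in>?Sa \<union> e. (if z \<in> e then 1 else 0))"
      by (rule sum.distrib)
    also have "(\<Sum>z\<in>?Sa \<union> e. (if z \<in> e then 1 else 0)) = (\<Sum>z\<in>{z\<in>?Sa \<union> e. z \<in> e}. (1::real))"
      using fin fine by (intro sum.inter_filter[symmetric]) auto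
    also have "{z\<in>?Sa \<union> e. z \<in> e} = e" by blast
    also have "(\<Sum>z\<in>?Sa \<union> e. \<bar>fst g z\<bar>) = (\<Sum>z\<in>?Sa. \<bar>fst g z\<bar>)"
      using fin fine by (intro sum_supp_eq[symmetric]) auto
    finally have "(\<Sum>z\<in>{z. a' z \<noteq> 0}. \<bar>a' z\<bar>) \<le> (\<Sum>z\<in>?Sa. \<bar>fst g z\<bar>) + 2"
      using carde by (simp add: add_mono)
    then have "Sz (jump V0 E g evt) \<le> Sz g + 2" unfolding J Sz_def by simp
    with okJ show ?thesis by simp
  qed
qed


definition phi :: "real \<Rightarrow> 'h state \<Rightarrow> 'h event \<Rightarrow> ('h event \<Rightarrow> real) \<Rightarrow> real" where
  "phi \<theta> g evt c = (if (\<forall>b\<in>Ev g. c evt / rate m k g evt \<le> c b / rate m k g b)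
     then exp (- \<theta> * (c evt / rate m k g evt)) else 0)"

primrec Gm :: "real \<Rightarrow> nat \<Rightarrow> 'h state \<Rightarrow> (nat \<times> 'h event \<Rightarrow> real) \<Rightarrow> nat \<Rightarrow> real" where
  "Gm \<theta> j g \<omega> 0 = 1"
| "Gm \<theta> j g \<omega> (Suc n) = (\<Sum>evt\<in>Ev g. phi \<theta> g evt (\<lambda>e. \<omega> (j, e)) * Gm \<theta> (Suc j) (jump V0 E g evt) \<omega> n)"

primrec fc :: "nat \<Rightarrow> 'h state \<Rightarrow> (nat \<times> 'h event \<Rightarrow> real) \<Rightarrow> nat \<Rightarrow> 'h state \<times> ereal" where
  "fc j g \<omega> 0 = (g, 0)"
| "fc j g \<omega> (Suc n) = (let (g1, \<xi>) = step m k V0 E g (\<lambda>evt. \<omega> (j, evt)); (g2, \<tau>) = fc (Suc j) g1 \<omega> n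
     in (g2, \<xi> + \<tau>))"

lemma fc_back: "fc j g \<omega> (Suc n) = (let (g1, \<tau>) = fc j g \<omega> n; (g2, \<xi>) = step m k V0 E g1 (\<lambda>evt. \<omega> (j + n, evt))
     in (g2, \<tau> + \<xi>))"
proof (induction n arbitrary: j g)
  case 0 then show ?case by (simp add: split_def Let_def)
next
  case (Suc n)
  show ?case
    apply (subst fc.simps(2))
    apply (subst Suc.IH)
    apply (simp add: split_def Let_def add.assoc)
    done
qed

lemma jchain_fc: "jchain m k V0 E f \<omega> n = fc 0 f \<omega> n"
  apply (induction n)
   apply simp
  apply (subst fc_back)
  apply (simp add: split_def Let_def del: fc.simps)
  done

definition ee :: "real \<Rightarrow> ereal \<Rightarrow> ennreal" where
  "ee \<theta> \<tau> = (case \<tau> of ereal r \<Rightarrow> ennreal (exp (- \<theta> * r)) | _ \<Rightarrow> 0)"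

lemma ee_add: "ee \<theta> (a + b) \<le> ee \<theta> a * ee \<theta> b"
proof (cases a; cases b)
  fix r s assume ab: "a = ereal r" "b = ereal s"
  have "exp (- \<theta> * (r + s)) = exp (- \<theta> * r) * exp (- \<theta> * s)"
    by (simp add: mult_exp_exp ring_distribs)
  then show ?thesis using ab by (simp add: ee_def ennreal_mult)
qed (simp_all add: ee_def)

lemma step_eq: "step m k V0 E g c = (if Ev g = {} then (g, \<infinity>) else
   (jump V0 E g (arg_min_on (\<lambda>evt. c evt / rate m k g evt) (Ev g)),
    ereal (c (arg_min_on (\<lambda>evt. c evt / rate m k g evt) (Ev g)) /
       rate m k g (arg_min_on (\<lambda>evt. c evt / rate m k g evt) (Ev g)))))"
  by (simp add: step_def Ev_def Let_def)

lemma argmin_Ev: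
  assumes "ok g" "Ev g \<noteq> {}"
  shows "arg_min_on f (Ev g) \<in> Ev g" "\<And>b. b \<in> Ev g \<Longrightarrow> f (arg_min_on f (Ev g)) \<le> (f b :: real)"
  using arg_min_if_finite[OF Ev_finite[OF assms(1)] assms(2), of f] by (auto simp: not_less)

lemma fc_ok: "ok g \<Longrightarrow> ok (fst (fc j g \<omega> n)) \<and> Sz (fst (fc j g \<omega> n)) \<le> Sz g + real n * real (D + 2)"
proof (induction n arbitrary: j g)
  case 0 then show ?case by simp
next
  case (Suc n)
  show ?case
  proof (cases "Ev g = {}")
    case True
    then have "fst (fc j g \<omega> (Suc n)) = fst (fc (Suc j) g \<omega> n)"
      by (simp add: step_eq split_def Let_def)
    then show ?thesis using Suc.IH[OF Suc.prems, of "Suc j"] by (simp add: algebra_simps)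
  next
    case False
    define a where "a = arg_min_on (\<lambda>evt. \<omega> (j, evt) / rate m k g evt) (Ev g)"
    have a: "a \<in> Ev g" unfolding a_def by (rule argmin_Ev[OF Suc.prems False])
    have "fst (fc j g \<omega> (Suc n)) = fst (fc (Suc j) (jump V0 E g a) \<omega> n)"
      using False by (simp add: step_eq split_def Let_def a_def)
    then show ?thesis using Suc.IH[of "jump V0 E g a" "Suc j"] jump_ok_Sz[OF Suc.prems a]
      by (simp add: algebra_simps)
  qed
qed

lemma phi_nonneg: "0 \<le> phi \<theta> g evt c"
  by (simp add: phi_def)

lemma Gm_nonneg: "0 \<le> Gm \<theta> j g \<omega> n"
  by (induction n arbitrary: j g) (simp_all add: sum_nonneg mult_nonneg_nonneg phi_nonneg)

lemma fc_Gm: "ok g \<Longrightarrow> ee \<theta> (snd (fc j g \<omega> n)) \<le> ennreal (Gm \<theta> j g \<omega> n)"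
proof (induction n arbitrary: j g)
  case 0 then show ?case by (simp add: ee_def zero_ereal_def)
next
  case (Suc n)
  show ?case
  proof (cases "Ev g = {}")
    case True
    then have "snd (fc j g \<omega> (Suc n)) = \<infinity> + snd (fc (Suc j) g \<omega> n)"
      by (simp add: step_eq split_def Let_def)
    then have "ee \<theta> (snd (fc j g \<omega> (Suc n))) \<le> 0"
      using ee_add[of \<theta> \<infinity> "snd (fc (Suc j) g \<omega> n)"] by (simp add: ee_def)
    then show ?thesis by simp
  next
    case False
    define c where "c = (\<lambda>evt. \<omega> (j, evt))"
    define a where "a = arg_min_on (\<lambda>evt. c evt / rate m k g evt) (Ev g)"
    have a: "a \<in> Ev g" unfolding a_def by (rule argmin_Ev[OF Suc.prems False])
    have amin: "\<And>b. b \<in> Ev g \<Longrightarrow> c a / rate m k g a \<le> c b / rate m k g b"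
      unfolding a_def by (rule argmin_Ev[OF Suc.prems False])
    have ok1: "ok (jump V0 E g a)" using jump_ok_Sz[OF Suc.prems a] by simp
    have eq: "snd (fc j g \<omega> (Suc n)) = ereal (c a / rate m k g a) + snd (fc (Suc j) (jump V0 E g a) \<omega> n)"
      using False by (simp add: step_eq split_def Let_def a_def c_def)
    have phia: "phi \<theta> g a c = exp (- \<theta> * (c a / rate m k g a))"
      using amin by (simp add: phi_def)
    have "ee \<theta> (snd (fc j g \<omega> (Suc n))) \<le> ee \<theta> (ereal (c a / rate m k g a)) * ee \<theta> (snd (fc (Suc j) (jump V0 E g a) \<omega> n))"
      unfolding eq by (rule ee_add)
    also have "\<dots> \<le> ennreal (phi \<theta> g a c) * ennreal (Gm \<theta> (Suc j) (jump V0 E g a) \<omega> n)"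
      using Suc.IH[OF ok1, of "Suc j"] by (simp add: ee_def phia mult_left_mono)
    also have "\<dots> = ennreal (phi \<theta> g a c * Gm \<theta> (Suc j) (jump V0 E g a) \<omega> n)"
      by (rule ennreal_mult[symmetric]) (simp_all add: phi_nonneg Gm_nonneg)
    also have "\<dots> \<le> ennreal (Gm \<theta> j g \<omega> (Suc n))"
      unfolding Gm.simps c_def[symmetric]
      using Ev_finite[OF Suc.prems] a
      by (intro ennreal_leI member_le_sum[where f="\<lambda>evt. phi \<theta> g evt c * Gm \<theta> (Suc j) (jump V0 E g evt) \<omega> n"])
         (auto intro!: mult_nonneg_nonneg phi_nonneg Gm_nonneg)
    finally show ?thesis .
  qed
qed

end

abbreviation Mexp :: "real measure" where "Mexp \<equiv> density lborel (exponential_density 1)"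

lemma prob_Mexp: "prob_space Mexp"
  by (rule prob_space_exponential_density) simp

lemma sets_Mexp[simp]: "sets Mexp = sets borel"
  by simp

lemma space_Mexp[simp]: "space Mexp = UNIV"
  by simp

lemma pps: "product_prob_space (\<lambda>_. Mexp)"
  by (rule product_prob_spaceI) (rule prob_Mexp)

lemma comp_meas: "i \<in> B \<Longrightarrow> (\<lambda>x. x i) \<in> borel_measurable (PiM B (\<lambda>_. Mexp))"
proof -
  assume "i \<in> B"
  then have "(\<lambda>x. x i) \<in> measurable (PiM B (\<lambda>_. Mexp)) Mexp"
    by (rule measurable_component_singleton)
  moreover have "measurable (PiM B (\<lambda>_. Mexp)) Mexp = borel_measurable (PiM B (\<lambda>_. Mexp))"
    by (rule measurable_cong_sets) simp_all
  ultimately show ?thesis by simp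
qed

lemma int_exp_density: "0 < l \<Longrightarrow> (\<integral>\<^sup>+x. ennreal (exponential_density l x) \<partial>lborel) = 1"
proof -
  assume l: "0 < l"
  interpret prob_space "density lborel (exponential_density l)"
    by (rule prob_space_exponential_density[OF l])
  have "emeasure (density lborel (exponential_density l)) UNIV = 1"
    using emeasure_space_1 by simp
  then show ?thesis
    by (subst (asm) emeasure_density) auto
qed

lemma Mexp_tail:
  assumes c: "0 \<le> c"
  shows "(\<integral>\<^sup>+z. indicator {c..} z \<partial>Mexp) = ennreal (exp (- c))"
proof -
  have "(\<integral>\<^sup>+z. indicator {c..} z \<partial>Mexp) = (\<integral>\<^sup>+z. ennreal (exponential_density 1 z) * indicator {c..} z \<partial>lborel)"
    by (subst nn_integral_density) auto
  also have "\<dots> = (\<integral>\<^sup>+x. ennreal (exponential_density 1 (c + 1 * x)) * indicator {c..} (c + 1 * x) \<partial>lborel)"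
    using nn_integral_real_affine[of "\<lambda>z. ennreal (exponential_density 1 z) * indicator {c..} z" 1 c] by simp
  also have "\<dots> = (\<integral>\<^sup>+x. ennreal (exp (- c)) * ennreal (exponential_density 1 x) \<partial>lborel)"
  proof (intro nn_integral_cong)
    fix x :: real
    show "ennreal (exponential_density 1 (c + 1 * x)) * indicator {c..} (c + 1 * x) =
      ennreal (exp (- c)) * ennreal (exponential_density 1 x)"
    proof (cases "x < 0")
      case True then show ?thesis by (simp add: exponential_density_def indicator_def)
    next
      case False
      then have "exp (- (c + x)) = exp (- c) * exp (- x)" by (simp add: mult_exp_exp)
      then show ?thesis using False c
        by (simp add: exponential_density_def indicator_def ennreal_mult[symmetric])
    qed
  qed
  also have "\<dots> = ennreal (exp (- c))"
    by (subst nn_integral_cmult) (auto simp: int_exp_density)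
  finally show ?thesis .
qed

lemma Mexp_expint:
  assumes c: "0 \<le> c"
  shows "(\<integral>\<^sup>+y. ennreal (exp (- c * y)) \<partial>Mexp) = ennreal (1 / (1 + c))"
proof -
  have "(\<integral>\<^sup>+y. ennreal (exp (- c * y)) \<partial>Mexp) = (\<integral>\<^sup>+y. ennreal (exponential_density 1 y) * ennreal (exp (- c * y)) \<partial>lborel)"
    by (subst nn_integral_density) auto
  also have "\<dots> = (\<integral>\<^sup>+y. ennreal (1 / (1 + c)) * ennreal (exponential_density (1 + c) y) \<partial>lborel)"
  proof (intro nn_integral_cong)
    fix y :: real
    show "ennreal (exponential_density 1 y) * ennreal (exp (- c * y)) =
       ennreal (1 / (1 + c)) * ennreal (exponential_density (1 + c) y)"
    proof (cases "y < 0")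
      case True then show ?thesis by (simp add: exponential_density_def)
    next
      case False
      have "exp (- y) * exp (- c * y) = exp (- y * (1 + c))" by (simp add: mult_exp_exp algebra_simps)
      then show ?thesis using False c
        by (simp add: exponential_density_def ennreal_mult[symmetric])
    qed
  qed
  also have "\<dots> = ennreal (1 / (1 + c))"
    using c by (subst nn_integral_cmult) (auto simp: int_exp_density)
  finally show ?thesis .
qed


lemma prod_ind: "finite I \<Longrightarrow> (\<Prod>i\<in>I. (indicator (S i) (x i) :: ennreal)) = (if \<forall>i\<in>I. x i \<in> S i then 1 else 0)"
  by (induction I rule: finite_induct) auto

lemma AE_Mexp_nonneg: "AE y in Mexp. 0 \<le> y"
  by (subst AE_density) (auto simp: exponential_density_def)

lemma meas_core:
  assumes fin: "finite A" and e: "e \<in> A"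
  shows "(\<lambda>x. ennreal (if \<forall>b\<in>A. x e / r e \<le> x b / r b then exp (- \<theta> * (x e / r e)) else 0))
     \<in> borel_measurable (PiM A (\<lambda>_. Mexp))"
proof -
  let ?M = "PiM A (\<lambda>_. Mexp)"
  have ce: "(\<lambda>x. x e / r e) \<in> borel_measurable ?M"
    by (intro borel_measurable_divide comp_meas e borel_measurable_const)
  have P: "{x \<in> space ?M. \<forall>b\<in>A. x e / r e \<le> x b / r b} \<in> sets ?M"
  proof -
    have "{x \<in> space ?M. \<forall>b\<in>A. x e / r e \<le> x b / r b} = space ?M \<inter> (\<Inter>b\<in>A. {x \<in> space ?M. x e / r e \<le> x b / r b})"
      by auto
    also have "\<dots> \<in> sets ?M"
    proof (cases "A = {}")
      case False
      show ?thesis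
        using False fin
        by (intro sets.Int sets.top sets.finite_INT borel_measurable_le ce borel_measurable_divide comp_meas
            borel_measurable_const) auto
    qed (use e in auto)
    finally show ?thesis .
  qed
  have "(\<lambda>x. - \<theta> * (x e / r e)) \<in> borel_measurable ?M"
    by (intro borel_measurable_times borel_measurable_const ce)
  then have "(\<lambda>x. exp (- \<theta> * (x e / r e))) \<in> borel_measurable ?M"
    by (rule measurable_compose[OF _ borel_measurable_exp])
  then have "(\<lambda>x. if \<forall>b\<in>A. x e / r e \<le> x b / r b then exp (- \<theta> * (x e / r e)) else 0) \<in> borel_measurable ?M"
    by (intro measurable_If P borel_measurable_const)
  then show ?thesis by (rule measurable_compose[OF _ measurable_ennreal])
qed

lemma core:
  fixes A :: "'a set" and r :: "'a \<Rightarrow> real"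
  assumes fin: "finite A" and e: "e \<in> A" and rpos: "\<And>b. b \<in> A \<Longrightarrow> 0 < r b" and th: "0 \<le> \<theta>"
  shows "(\<integral>\<^sup>+x. ennreal (if \<forall>b\<in>A. x e / r e \<le> x b / r b then exp (- \<theta> * (x e / r e)) else 0) \<partial>PiM A (\<lambda>_. Mexp))
     = ennreal (r e / (sum r A + \<theta>))"
proof -
  interpret PS: product_prob_space "\<lambda>_::'a. Mexp" A by (rule pps)
  define A' where "A' = A - {e}"
  have A: "A = insert e A'" "e \<notin> A'" "finite A'" using e fin by (auto simp: A'_def)
  have re: "0 < r e" using rpos e by auto
  define f where "f x = ennreal (if \<forall>b\<in>A. x e / r e \<le> x b / r b then exp (- \<theta> * (x e / r e)) else 0)" for x :: "'a \<Rightarrow> real"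
  have meas: "f \<in> borel_measurable (PiM (insert e A') (\<lambda>_. Mexp))"
    unfolding f_def A(1)[symmetric] using fin e by (rule meas_core)
  have "(\<integral>\<^sup>+x. f x \<partial>PiM A (\<lambda>_. Mexp)) = (\<integral>\<^sup>+y. (\<integral>\<^sup>+x. f (x(e := y)) \<partial>PiM A' (\<lambda>_. Mexp)) \<partial>Mexp)"
    unfolding A(1) by (rule PS.product_nn_integral_insert_rev[OF A(3) A(2) meas])
  also have "\<dots> = (\<integral>\<^sup>+y. ennreal (exp (- ((\<theta> + sum r A') / r e) * y)) \<partial>Mexp)"
  proof (rule nn_integral_cong_AE)
    show "AE y in Mexp. (\<integral>\<^sup>+x. f (x(e := y)) \<partial>PiM A' (\<lambda>_. Mexp)) = ennreal (exp (- ((\<theta> + sum r A') / r e) * y))"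
      using AE_Mexp_nonneg
    proof eventually_elim
      fix y :: real assume y: "0 \<le> y"
      have pt: "f (x(e := y)) = ennreal (exp (- \<theta> * (y / r e))) * (\<Prod>b\<in>A'. indicator {y * r b / r e ..} (x b))" for x
      proof -
        have iff: "y / r e \<le> x b / r b \<longleftrightarrow> x b \<in> {y * r b / r e ..}" if "b \<in> A'" for b
        proof -
          have rb: "0 < r b" using that rpos A by auto
          show ?thesis using rb re by (auto simp: field_simps)
        qed
        have "(\<forall>b\<in>A. (x(e := y)) e / r e \<le> (x(e := y)) b / r b) \<longleftrightarrow> (\<forall>b\<in>A'. x b \<in> {y * r b / r e ..})"
          using A iff by auto
        then show ?thesis unfolding f_def using prod_ind[OF A(3), of "\<lambda>b. {y * r b / r e ..}" x]
          by simp
      qed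
      have "(\<integral>\<^sup>+x. f (x(e := y)) \<partial>PiM A' (\<lambda>_. Mexp))
          = ennreal (exp (- \<theta> * (y / r e))) * (\<integral>\<^sup>+x. (\<Prod>b\<in>A'. indicator {y * r b / r e ..} (x b)) \<partial>PiM A' (\<lambda>_. Mexp))"
        unfolding pt by (rule nn_integral_cmult) (use A in measurable)
      also have "(\<integral>\<^sup>+x. (\<Prod>b\<in>A'. indicator {y * r b / r e ..} (x b)) \<partial>PiM A' (\<lambda>_. Mexp))
          = (\<Prod>b\<in>A'. (\<integral>\<^sup>+z. indicator {y * r b / r e ..} z \<partial>Mexp))"
        by (rule PS.product_nn_integral_prod[OF A(3)]) simp
      also have "\<dots> = (\<Prod>b\<in>A'. ennreal (exp (- (y * r b / r e))))"
      proof (rule prod.cong[OF refl])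
        fix b assume "b \<in> A'"
        then have "0 < r b" using rpos A by auto
        then have "0 \<le> y * r b / r e" using y re by simp
        then show "(\<integral>\<^sup>+z. indicator {y * r b / r e ..} z \<partial>Mexp) = ennreal (exp (- (y * r b / r e)))"
          by (rule Mexp_tail)
      qed
      also have "\<dots> = ennreal (\<Prod>b\<in>A'. exp (- (y * r b / r e)))"
        by (rule prod_ennreal) simp
      also have "(\<Prod>b\<in>A'. exp (- (y * r b / r e))) = exp (\<Sum>b\<in>A'. - (y * r b / r e))"
        using A(3) by (simp add: exp_sum)
      also have "ennreal (exp (- \<theta> * (y / r e))) * ennreal (exp (\<Sum>b\<in>A'. - (y * r b / r e)))
          = ennreal (exp (- ((\<theta> + sum r A') / r e) * y))"
      proof -
        have "(\<Sum>b\<in>A'. - (y * r b / r e)) = - (y / r e) * sum r A'"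
          by (simp add: sum_distrib_left sum_negf)
        moreover have "- \<theta> * (y / r e) + (- (y / r e) * sum r A') = - ((\<theta> + sum r A') / r e) * y"
          using re by (simp add: field_simps)
        ultimately have "exp (- \<theta> * (y / r e)) * exp (\<Sum>b\<in>A'. - (y * r b / r e)) = exp (- ((\<theta> + sum r A') / r e) * y)"
          by (simp add: mult_exp_exp)
        then show ?thesis by (simp add: ennreal_mult[symmetric])
      qed
      finally show "(\<integral>\<^sup>+x. f (x(e := y)) \<partial>PiM A' (\<lambda>_. Mexp)) = ennreal (exp (- ((\<theta> + sum r A') / r e) * y))" .
    qed
  qed
  also have "\<dots> = ennreal (1 / (1 + (\<theta> + sum r A') / r e))"
  proof (rule Mexp_expint)
    have "0 \<le> sum r A'" using rpos A by (intro sum_nonneg) (auto intro: less_imp_le)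
    then show "0 \<le> (\<theta> + sum r A') / r e" using th re by simp
  qed
  also have "1 / (1 + (\<theta> + sum r A') / r e) = r e / (sum r A + \<theta>)"
    using re A by (simp add: field_simps)
  finally show ?thesis unfolding f_def .
qed

lemma meas_core_real:
  assumes fin: "finite A" and e: "e \<in> A"
  shows "(\<lambda>x. (if \<forall>b\<in>A. x e / r e \<le> x b / r b then exp (- \<theta> * (x e / r e)) else 0))
     \<in> borel_measurable (PiM A (\<lambda>_. Mexp))"
proof -
  let ?M = "PiM A (\<lambda>_. Mexp)"
  have ce: "(\<lambda>x. x e / r e) \<in> borel_measurable ?M"
    by (intro borel_measurable_divide comp_meas e borel_measurable_const)
  have P: "{x \<in> space ?M. \<forall>b\<in>A. x e / r e \<le> x b / r b} \<in> sets ?M"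
  proof -
    have "{x \<in> space ?M. \<forall>b\<in>A. x e / r e \<le> x b / r b} = space ?M \<inter> (\<Inter>b\<in>A. {x \<in> space ?M. x e / r e \<le> x b / r b})"
      by auto
    also have "\<dots> \<in> sets ?M"
    proof (cases "A = {}")
      case False
      show ?thesis
        using False fin
        by (intro sets.Int sets.top sets.finite_INT borel_measurable_le ce borel_measurable_divide comp_meas
            borel_measurable_const) auto
    qed (use e in auto)
    finally show ?thesis .
  qed
  have "(\<lambda>x. - \<theta> * (x e / r e)) \<in> borel_measurable ?M"
    by (intro borel_measurable_times borel_measurable_const ce)
  then have "(\<lambda>x. exp (- \<theta> * (x e / r e))) \<in> borel_measurable ?M"
    by (rule measurable_compose[OF _ borel_measurable_exp])
  then show ?thesis
    by (intro measurable_If P borel_measurable_const)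
qed

lemma indep_prod:
  fixes h1 h2 :: "('i \<Rightarrow> real) \<Rightarrow> real"
  assumes AB: "A \<inter> B = {}" and h1: "h1 \<in> borel_measurable (PiM A (\<lambda>_. Mexp))"
    and h2: "h2 \<in> borel_measurable (PiM B (\<lambda>_. Mexp))"
    and nn1: "\<And>x. 0 \<le> h1 x" and nn2: "\<And>x. 0 \<le> h2 x"
  shows "(\<integral>\<^sup>+\<omega>. ennreal (h1 (restrict \<omega> A) * h2 (restrict \<omega> B)) \<partial>PiM UNIV (\<lambda>_. Mexp))
    = (\<integral>\<^sup>+\<omega>. ennreal (h1 (restrict \<omega> A)) \<partial>PiM UNIV (\<lambda>_. Mexp)) * (\<integral>\<^sup>+\<omega>. ennreal (h2 (restrict \<omega> B)) \<partial>PiM UNIV (\<lambda>_. Mexp))"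
proof -
  let ?P = "PiM UNIV (\<lambda>_::'i. Mexp)"
  interpret P: prob_space ?P by (rule prob_space_PiM) (rule prob_Mexp)
  have rv: "\<And>i. (\<lambda>\<omega>. \<omega> i) \<in> measurable ?P Mexp" by (rule measurable_component_singleton) simp
  have d: "distr ?P (PiM UNIV (\<lambda>i. Mexp)) (\<lambda>x. \<lambda>i\<in>UNIV. x i) = PiM UNIV (\<lambda>i. distr ?P Mexp (\<lambda>\<omega>. \<omega> i))"
  proof -
    have "(\<lambda>x. \<lambda>i\<in>UNIV. x i) = (\<lambda>x::'i \<Rightarrow> real. x)" by (simp add: restrict_UNIV)
    moreover have "PiM UNIV (\<lambda>i. distr ?P Mexp (\<lambda>\<omega>. \<omega> i)) = ?P"
      by (intro PiM_cong refl distr_PiM_component prob_Mexp) simp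
    ultimately show ?thesis by simp
  qed
  have ind: "P.indep_vars (\<lambda>_. Mexp) (\<lambda>i \<omega>. \<omega> i) UNIV"
    by (rule P.indep_vars_iff_distr_eq_PiM[THEN iffD2, OF _ rv d]) simp
  have iv: "P.indep_var (PiM A (\<lambda>_. Mexp)) (\<lambda>\<omega>. restrict (\<lambda>i. \<omega> i) A) (PiM B (\<lambda>_. Mexp)) (\<lambda>\<omega>. restrict (\<lambda>i. \<omega> i) B)"
    by (rule P.indep_var_restrict[OF ind AB]) auto
  have m1: "(\<lambda>x. ennreal (h1 x)) \<in> borel_measurable (PiM A (\<lambda>_. Mexp))"
    using h1 by (rule measurable_compose[OF _ measurable_ennreal])
  have m2: "(\<lambda>x. ennreal (h2 x)) \<in> borel_measurable (PiM B (\<lambda>_. Mexp))"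
    using h2 by (rule measurable_compose[OF _ measurable_ennreal])
  define X1 where "X1 = (\<lambda>x. ennreal (h1 x)) \<circ> (\<lambda>\<omega>. restrict (\<lambda>i. \<omega> i) A)"
  define X2 where "X2 = (\<lambda>x. ennreal (h2 x)) \<circ> (\<lambda>\<omega>. restrict (\<lambda>i. \<omega> i) B)"
  have iv2: "P.indep_var borel X1 borel X2"
    unfolding X1_def X2_def by (rule P.indep_var_compose[OF iv m1 m2])
  have bb: "case_bool borel borel = (\<lambda>_::bool. borel :: ennreal measure)"
    by (rule ext) (simp split: bool.split)
  have iv3: "P.indep_vars (\<lambda>_. borel) (case_bool X1 X2) UNIV"
    using iv2 unfolding P.indep_var_def bb .
  have "(\<integral>\<^sup>+\<omega>. (\<Prod>i\<in>UNIV. case_bool X1 X2 i \<omega>) \<partial>?P) = (\<Prod>i\<in>UNIV. \<integral>\<^sup>+\<omega>. case_bool X1 X2 i \<omega> \<partial>?P)"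
    by (rule P.indep_vars_nn_integral[OF _ iv3]) auto
  then have "(\<integral>\<^sup>+\<omega>. X1 \<omega> * X2 \<omega> \<partial>?P) = (\<integral>\<^sup>+\<omega>. X1 \<omega> \<partial>?P) * (\<integral>\<^sup>+\<omega>. X2 \<omega> \<partial>?P)"
    by (simp add: UNIV_bool mult.commute)
  moreover have "\<And>\<omega>. X1 \<omega> * X2 \<omega> = ennreal (h1 (restrict \<omega> A) * h2 (restrict \<omega> B))"
    by (simp add: X1_def X2_def ennreal_mult nn1 nn2)
  ultimately show ?thesis by (simp add: X1_def X2_def)
qed

lemma frac_mono: "0 \<le> x \<Longrightarrow> x \<le> y \<Longrightarrow> 0 < (t::real) \<Longrightarrow> x / (x + t) \<le> y / (y + t)"
proof -
  assume a: "0 \<le> x" "x \<le> y" "0 < t"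
  have "x * (y + t) \<le> y * (x + t)" using mult_right_mono[OF a(2), of t] a by (simp add: algebra_simps)
  then show ?thesis using a by (simp add: divide_simps)
qed

context ips
begin

lemma cs_prob: "prob_space clock_space"
  unfolding clock_space_def by (rule prob_space_PiM) (rule prob_Mexp)

lemma phi_meas:
  assumes g: "ok g" and evt: "evt \<in> Ev g" and B: "\<And>e. (j, e) \<in> B"
  shows "(\<lambda>x. phi \<theta> g evt (\<lambda>e. x (j, e))) \<in> borel_measurable (PiM B (\<lambda>_. Mexp))"
proof -
  let ?H = "\<lambda>x. (if \<forall>b\<in>Ev g. x evt / rate m k g evt \<le> x b / rate m k g b then exp (- \<theta> * (x evt / rate m k g evt)) else 0)"
  have T: "(\<lambda>x. \<lambda>n\<in>Ev g. x (j, n)) \<in> measurable (PiM B (\<lambda>_. Mexp)) (PiM (Ev g) (\<lambda>_. Mexp))"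
    by (intro measurable_restrict measurable_component_singleton B)
  have H: "?H \<in> borel_measurable (PiM (Ev g) (\<lambda>_. Mexp))"
    using meas_core_real[OF Ev_finite[OF g] evt, where r="rate m k g" and \<theta>=\<theta>] by simp
  have "(\<lambda>x. ?H (\<lambda>n\<in>Ev g. x (j, n))) \<in> borel_measurable (PiM B (\<lambda>_. Mexp))"
    using measurable_compose[OF T H] by (simp add: comp_def)
  moreover have "(\<lambda>x. ?H (\<lambda>n\<in>Ev g. x (j, n))) = (\<lambda>x. phi \<theta> g evt (\<lambda>e. x (j, e)))"
    using evt by (auto simp: phi_def fun_eq_iff)
  ultimately show ?thesis by simp
qed

lemma Gm_meas: "ok g \<Longrightarrow> {p. j \<le> fst p} \<subseteq> B \<Longrightarrow> (\<lambda>x. Gm \<theta> j g x n) \<in> borel_measurable (PiM B (\<lambda>_. Mexp))"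
proof (induction n arbitrary: j g)
  case 0 show ?case by simp
next
  case (Suc n)
  have "(\<lambda>x. phi \<theta> g evt (\<lambda>e. x (j, e)) * Gm \<theta> (Suc j) (jump V0 E g evt) x n) \<in> borel_measurable (PiM B (\<lambda>_. Mexp))"
    if evt: "evt \<in> Ev g" for evt
  proof (intro borel_measurable_times)
    show "(\<lambda>x. phi \<theta> g evt (\<lambda>e. x (j, e))) \<in> borel_measurable (PiM B (\<lambda>_. Mexp))"
      using Suc.prems by (intro phi_meas evt) auto
    show "(\<lambda>x. Gm \<theta> (Suc j) (jump V0 E g evt) x n) \<in> borel_measurable (PiM B (\<lambda>_. Mexp))"
      using Suc.prems jump_ok_Sz[OF Suc.prems(1) evt] by (intro Suc.IH) auto
  qed
  then show ?case by (simp only: Gm.simps) (rule borel_measurable_sum)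
qed

lemma Gm_local: "(\<And>i e. j \<le> i \<Longrightarrow> x (i, e) = y (i, e)) \<Longrightarrow> Gm \<theta> j g x n = Gm \<theta> j g y n"
proof (induction n arbitrary: j g)
  case (Suc n)
  have "(\<lambda>e. x (j, e)) = (\<lambda>e. y (j, e))" using Suc.prems by auto
  moreover have "\<And>g'. Gm \<theta> (Suc j) g' x n = Gm \<theta> (Suc j) g' y n" using Suc.prems by (intro Suc.IH) auto
  ultimately show ?case by simp
qed simp

lemma phi_int:
  assumes g: "ok g" and evt: "evt \<in> Ev g" and th: "0 \<le> \<theta>"
  shows "(\<integral>\<^sup>+\<omega>. ennreal (phi \<theta> g evt (\<lambda>e. \<omega> (j, e))) \<partial>clock_space) = ennreal (rate m k g evt / (Rt g + \<theta>))"
proof -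
  let ?H = "\<lambda>x. ennreal (if \<forall>b\<in>Ev g. x evt / rate m k g evt \<le> x b / rate m k g b then exp (- \<theta> * (x evt / rate m k g evt)) else 0)"
  have eq: "\<And>\<omega>. ennreal (phi \<theta> g evt (\<lambda>e. \<omega> (j, e))) = ?H (\<lambda>n\<in>Ev g. \<omega> (j, n))"
    using evt by (simp add: phi_def)
  have T: "(\<lambda>\<omega>. \<lambda>n\<in>Ev g. \<omega> (j, n)) \<in> measurable clock_space (PiM (Ev g) (\<lambda>_. Mexp))"
    unfolding clock_space_def by (intro measurable_restrict measurable_component_singleton) simp
  have D: "distr clock_space (PiM (Ev g) (\<lambda>_. Mexp)) (\<lambda>\<omega>. \<lambda>n\<in>Ev g. \<omega> (j, n)) = PiM (Ev g) (\<lambda>_. Mexp)"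
    unfolding clock_space_def
    using distr_PiM_reindex[of UNIV "\<lambda>_. Mexp" "\<lambda>n. (j, n)" "Ev g"] prob_Mexp by (simp add: inj_on_def)
  have "(\<integral>\<^sup>+\<omega>. ennreal (phi \<theta> g evt (\<lambda>e. \<omega> (j, e))) \<partial>clock_space) = (\<integral>\<^sup>+\<omega>. ?H (\<lambda>n\<in>Ev g. \<omega> (j, n)) \<partial>clock_space)"
    by (simp only: eq)
  also have "\<dots> = (\<integral>\<^sup>+x. ?H x \<partial>distr clock_space (PiM (Ev g) (\<lambda>_. Mexp)) (\<lambda>\<omega>. \<lambda>n\<in>Ev g. \<omega> (j, n)))"
    by (rule nn_integral_distr[symmetric, OF T]) (simp only: D, rule meas_core[OF Ev_finite[OF g] evt])
  also have "\<dots> = (\<integral>\<^sup>+x. ?H x \<partial>PiM (Ev g) (\<lambda>_. Mexp))" by (simp only: D)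
  also have "\<dots> = ennreal (rate m k g evt / (sum (rate m k g) (Ev g) + \<theta>))"
    by (rule core) (use g evt th Ev_finite in \<open>auto simp: Ev_def\<close>)
  finally show ?thesis by (simp add: Rt_def)
qed

end

context ips
begin

primrec Bn :: "real \<Rightarrow> nat \<Rightarrow> real \<Rightarrow> real" where
  "Bn \<theta> 0 s = 1"
| "Bn \<theta> (Suc n) s = (M * s / (M * s + \<theta>)) * Bn \<theta> n (s + real (D + 2))"

lemma Bn_nonneg: "0 < \<theta> \<Longrightarrow> 0 \<le> s \<Longrightarrow> 0 \<le> Bn \<theta> n s"
proof (induction n arbitrary: s)
  case (Suc n)
  have "0 \<le> M * s / (M * s + \<theta>)" using M_pos Suc.prems by simp
  moreover have "0 \<le> Bn \<theta> n (s + real (D + 2))" using Suc by simp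
  ultimately show ?case unfolding Bn.simps by (rule mult_nonneg_nonneg)
qed simp

lemma Bn_mono: "0 < \<theta> \<Longrightarrow> 0 \<le> s \<Longrightarrow> s \<le> s' \<Longrightarrow> Bn \<theta> n s \<le> Bn \<theta> n s'"
proof (induction n arbitrary: s s')
  case (Suc n)
  have q: "M * s / (M * s + \<theta>) \<le> M * s' / (M * s' + \<theta>)"
    using Suc.prems M_pos by (intro frac_mono) (auto intro: mult_left_mono)
  have "0 \<le> M * s' / (M * s' + \<theta>)" using M_pos Suc.prems by simp
  moreover have "0 \<le> Bn \<theta> n (s + real (D + 2))" using Suc.prems by (intro Bn_nonneg) auto
  moreover have "Bn \<theta> n (s + real (D + 2)) \<le> Bn \<theta> n (s' + real (D + 2))"
    using Suc.prems by (intro Suc.IH) auto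
  ultimately show ?case unfolding Bn.simps by (intro mult_mono[OF q])
qed simp

lemma Gm_int: "ok g \<Longrightarrow> 0 < \<theta> \<Longrightarrow> (\<integral>\<^sup>+\<omega>. ennreal (Gm \<theta> j g \<omega> n) \<partial>clock_space) \<le> ennreal (Bn \<theta> n (Sz g))"
proof (induction n arbitrary: j g)
  case 0
  interpret prob_space clock_space by (rule cs_prob)
  show ?case by (simp add: emeasure_space_1)
next
  case (Suc n)
  let ?P = "clock_space :: (nat \<times> 'h event \<Rightarrow> real) measure"
  define g' where "g' evt = jump V0 E g evt" for evt
  define A where "A = {p::nat \<times> 'h event. fst p = j}"
  define B where "B = {p::nat \<times> 'h event. Suc j \<le> fst p}"
  define K where "K = Bn \<theta> n (Sz g + real (D + 2))"
  have K: "0 \<le> K" unfolding K_def using Suc.prems by (intro Bn_nonneg) (auto intro: add_nonneg_nonneg Sz_nonneg)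
  have AB: "A \<inter> B = {}" by (auto simp: A_def B_def)
  have fin: "finite (Ev g)" by (rule Ev_finite[OF Suc.prems(1)])
  have meas: "(\<lambda>\<omega>. ennreal (phi \<theta> g evt (\<lambda>e. \<omega> (j, e)) * Gm \<theta> (Suc j) (g' evt) \<omega> n)) \<in> borel_measurable ?P"
    if evt: "evt \<in> Ev g" for evt
  proof -
    have okg': "ok (g' evt)" using jump_ok_Sz[OF Suc.prems(1) evt] by (simp add: g'_def)
    have "(\<lambda>\<omega>. phi \<theta> g evt (\<lambda>e. \<omega> (j, e)) * Gm \<theta> (Suc j) (g' evt) \<omega> n) \<in> borel_measurable ?P"
      unfolding clock_space_def
      by (intro borel_measurable_times phi_meas[OF Suc.prems(1) evt] Gm_meas[OF okg']) auto
    then show ?thesis by (rule measurable_compose[OF _ measurable_ennreal])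
  qed
  have trm: "(\<integral>\<^sup>+\<omega>. ennreal (phi \<theta> g evt (\<lambda>e. \<omega> (j, e)) * Gm \<theta> (Suc j) (g' evt) \<omega> n) \<partial>?P)
      \<le> ennreal (rate m k g evt / (Rt g + \<theta>) * K)"
    if evt: "evt \<in> Ev g" for evt
  proof -
    have okg': "ok (g' evt)" and Szg': "Sz (g' evt) \<le> Sz g + real (D + 2)"
      using jump_ok_Sz[OF Suc.prems(1) evt] by (auto simp: g'_def)
    have e1: "\<And>\<omega>. phi \<theta> g evt (\<lambda>e. \<omega> (j, e)) = phi \<theta> g evt (\<lambda>e. (restrict \<omega> A) (j, e))"
      by (simp add: A_def)
    have e2: "\<And>\<omega>. Gm \<theta> (Suc j) (g' evt) \<omega> n = Gm \<theta> (Suc j) (g' evt) (restrict \<omega> B) n"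
      by (rule Gm_local) (simp add: B_def)
    have m1: "(\<lambda>x. phi \<theta> g evt (\<lambda>e. x (j, e))) \<in> borel_measurable (PiM A (\<lambda>_. Mexp))"
      by (rule phi_meas[OF Suc.prems(1) evt]) (simp add: A_def)
    have m2: "(\<lambda>x. Gm \<theta> (Suc j) (g' evt) x n) \<in> borel_measurable (PiM B (\<lambda>_. Mexp))"
      by (rule Gm_meas[OF okg']) (simp add: B_def)
    have "(\<integral>\<^sup>+\<omega>. ennreal (phi \<theta> g evt (\<lambda>e. \<omega> (j, e)) * Gm \<theta> (Suc j) (g' evt) \<omega> n) \<partial>?P)
        = (\<integral>\<^sup>+\<omega>. ennreal (phi \<theta> g evt (\<lambda>e. (restrict \<omega> A) (j, e)) * Gm \<theta> (Suc j) (g' evt) (restrict \<omega> B) n) \<partial>?P)"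
      by (simp only: e1[symmetric] e2[symmetric])
    also have "\<dots> = (\<integral>\<^sup>+\<omega>. ennreal (phi \<theta> g evt (\<lambda>e. (restrict \<omega> A) (j, e))) \<partial>?P)
         * (\<integral>\<^sup>+\<omega>. ennreal (Gm \<theta> (Suc j) (g' evt) (restrict \<omega> B) n) \<partial>?P)"
      unfolding clock_space_def by (rule indep_prod[OF AB m1 m2]) (simp_all add: phi_nonneg Gm_nonneg)
    also have "(\<integral>\<^sup>+\<omega>. ennreal (phi \<theta> g evt (\<lambda>e. (restrict \<omega> A) (j, e))) \<partial>?P) = ennreal (rate m k g evt / (Rt g + \<theta>))"
      using phi_int[OF Suc.prems(1) evt, of \<theta> j] Suc.prems(2) by (simp only: e1[symmetric])
    also have "(\<integral>\<^sup>+\<omega>. ennreal (Gm \<theta> (Suc j) (g' evt) (restrict \<omega> B) n) \<partial>?P) = (\<integral>\<^sup>+\<omega>. ennreal (Gm \<theta> (Suc j) (g' evt) \<omega> n) \<partial>?P)"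
      by (simp only: e2[symmetric])
    also have "ennreal (rate m k g evt / (Rt g + \<theta>)) * (\<integral>\<^sup>+\<omega>. ennreal (Gm \<theta> (Suc j) (g' evt) \<omega> n) \<partial>?P)
        \<le> ennreal (rate m k g evt / (Rt g + \<theta>)) * ennreal K"
    proof (rule mult_left_mono)
      have "(\<integral>\<^sup>+\<omega>. ennreal (Gm \<theta> (Suc j) (g' evt) \<omega> n) \<partial>?P) \<le> ennreal (Bn \<theta> n (Sz (g' evt)))"
        by (rule Suc.IH[OF okg' Suc.prems(2)])
      also have "\<dots> \<le> ennreal K" unfolding K_def
        using Suc.prems(2) Szg' by (intro ennreal_leI Bn_mono Sz_nonneg)
      finally show "(\<integral>\<^sup>+\<omega>. ennreal (Gm \<theta> (Suc j) (g' evt) \<omega> n) \<partial>?P) \<le> ennreal K" .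
    qed simp
    also have "\<dots> = ennreal (rate m k g evt / (Rt g + \<theta>) * K)"
      using evt K Rt_nonneg[of g] Suc.prems(2) by (intro ennreal_mult[symmetric]) (auto simp: Ev_def)
    finally show ?thesis .
  qed
  have "(\<integral>\<^sup>+\<omega>. ennreal (Gm \<theta> j g \<omega> (Suc n)) \<partial>?P)
      = (\<integral>\<^sup>+\<omega>. (\<Sum>evt\<in>Ev g. ennreal (phi \<theta> g evt (\<lambda>e. \<omega> (j, e)) * Gm \<theta> (Suc j) (g' evt) \<omega> n)) \<partial>?P)"
    by (intro nn_integral_cong, subst sum_ennreal)
       (auto simp: g'_def intro!: mult_nonneg_nonneg phi_nonneg Gm_nonneg)
  also have "\<dots> = (\<Sum>evt\<in>Ev g. \<integral>\<^sup>+\<omega>. ennreal (phi \<theta> g evt (\<lambda>e. \<omega> (j, e)) * Gm \<theta> (Suc j) (g' evt) \<omega> n) \<partial>?P)"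
    by (rule nn_integral_sum) (rule meas)
  also have "\<dots> \<le> (\<Sum>evt\<in>Ev g. ennreal (rate m k g evt / (Rt g + \<theta>) * K))"
    by (rule sum_mono) (rule trm)
  also have "\<dots> = ennreal (\<Sum>evt\<in>Ev g. rate m k g evt / (Rt g + \<theta>) * K)"
    using K Rt_nonneg[of g] Suc.prems(2) by (intro sum_ennreal) (simp add: Ev_def)
  also have "(\<Sum>evt\<in>Ev g. rate m k g evt / (Rt g + \<theta>) * K) = Rt g / (Rt g + \<theta>) * K"
    by (simp add: Rt_def sum_distrib_right sum_divide_distrib)
  also have "ennreal (Rt g / (Rt g + \<theta>) * K) \<le> ennreal (Bn \<theta> (Suc n) (Sz g))"
  proof (rule ennreal_leI)
    have "Rt g / (Rt g + \<theta>) \<le> M * Sz g / (M * Sz g + \<theta>)"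
      using Rt_nonneg[of g] Rt_le[OF Suc.prems(1)] Suc.prems(2) by (rule frac_mono)
    then show "Rt g / (Rt g + \<theta>) * K \<le> Bn \<theta> (Suc n) (Sz g)"
      using K unfolding Bn.simps K_def[symmetric] by (rule mult_right_mono)
  qed
  finally show ?case .
qed

end

lemma prod_frac_fact: "(\<Prod>i<n. real (i + 1) / real (i + 1 + p)) = fact n * fact p / fact (n + p)"
proof (induction n)
  case 0 then show ?case by simp
next
  case (Suc n)
  have f1: "(fact (Suc n + p) :: real) = real (n + p + 1) * fact (n + p)"
    by (simp add: algebra_simps)
  have f2: "(fact (Suc n) :: real) = real (n + 1) * fact n" by simp
  have pos: "(0::real) < fact (n + p)" "(0::real) < real (n + 1 + p)" by auto
  show ?case unfolding prod.lessThan_Suc Suc.IH f1 f2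
    using pos by (simp add: field_simps)
qed

lemma fact_ge: "fact n * real (n + 1) ^ p \<le> (fact (n + p) :: real)"
proof (induction p)
  case 0 then show ?case by simp
next
  case (Suc p)
  have "fact n * real (n + 1) ^ Suc p = real (n + 1) * (fact n * real (n + 1) ^ p)" by simp
  also have "\<dots> \<le> real (n + p + 1) * fact (n + p)"
    using Suc.IH by (intro mult_mono) auto
  also have "\<dots> = fact (n + Suc p)" by (simp add: algebra_simps)
  finally show ?case .
qed

lemma prod_frac_bound: "(\<Prod>i<n. real (i + 1) / real (i + 1 + p)) \<le> fact p / real (n + 1) ^ p"
proof -
  have pos: "(0::real) < fact n" "(0::real) < real (n + 1) ^ p" by auto
  have "(\<Prod>i<n. real (i + 1) / real (i + 1 + p)) = fact p * fact n / fact (n + p)"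
    by (subst prod_frac_fact) (simp add: mult.commute)
  also have "\<dots> \<le> fact p * fact n / (fact n * real (n + 1) ^ p)"
    using pos fact_ge[of n p] by (intro divide_left_mono mult_pos_pos) auto
  also have "\<dots> = fact p / real (n + 1) ^ p" using pos by simp
  finally show ?thesis .
qed

lemma powr_split: "0 < (y::real) \<Longrightarrow> y \<le> S \<Longrightarrow> 1 \<le> \<alpha> \<Longrightarrow> y powr \<alpha> \<le> y * (S + 1) powr (\<alpha> - 1)"
proof -
  assume y: "0 < y" "y \<le> S" and a: "1 \<le> \<alpha>"
  have "y powr \<alpha> = y powr 1 * y powr (\<alpha> - 1)" using powr_add[of y 1 "\<alpha> - 1"] by simp
  also have "\<dots> = y * y powr (\<alpha> - 1)" using y by simp
  also have "\<dots> \<le> y * (S + 1) powr (\<alpha> - 1)"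
    using y a by (intro mult_left_mono powr_mono2) auto
  finally show ?thesis .
qed

context ips
begin

lemma normpow_le:
  assumes g: "ok g" and a: "1 \<le> \<alpha>"
  shows "normpow V E m k \<alpha> g \<le> M * (Sz g + 1) powr \<alpha>"
proof -
  let ?Q = "(Sz g + 1) powr (\<alpha> - 1)"
  let ?Sa = "{x. fst g x \<noteq> 0}" and ?Sb = "{e. snd g e \<noteq> 0}"
  have fin: "finite ?Sa" "finite ?Sb" using g by (auto simp: ok_def)
  have sa: "{x \<in> V. fst g x \<noteq> 0} = ?Sa" using g by (auto simp: ok_def)
  have sb: "{e \<in> E. snd g e \<noteq> 0} = ?Sb" using g by (auto simp: ok_def)
  have Sz1: "(\<Sum>x\<in>?Sa. \<bar>fst g x\<bar>) \<le> Sz g" "(\<Sum>e\<in>?Sb. norm (snd g e)) \<le> Sz g"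
    unfolding Sz_def by (auto intro!: sum_nonneg)
  have Q: "0 \<le> ?Q" by simp
  have n1: "(\<Sum>x\<in>?Sa. \<bar>fst g x\<bar> powr \<alpha> / m x) \<le> (\<Sum>x\<in>?Sa. M * ?Q * \<bar>fst g x\<bar>)"
  proof (rule sum_mono)
    fix x assume x: "x \<in> ?Sa"
    then have xV: "x \<in> V" using g by (auto simp: ok_def)
    have le: "\<bar>fst g x\<bar> \<le> Sz g"
      using member_le_sum[of x ?Sa "\<lambda>x. \<bar>fst g x\<bar>"] fin x Sz1 by auto
    have "\<bar>fst g x\<bar> powr \<alpha> \<le> \<bar>fst g x\<bar> * ?Q" using x le a by (intro powr_split) auto
    moreover have "0 < m x" "1 / m x \<le> M" using m_pos Mm xV by auto
    ultimately have "\<bar>fst g x\<bar> powr \<alpha> * (1 / m x) \<le> (\<bar>fst g x\<bar> * ?Q) * M"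
      by (intro mult_mono) auto
    then show "\<bar>fst g x\<bar> powr \<alpha> / m x \<le> M * ?Q * \<bar>fst g x\<bar>" by (simp add: algebra_simps)
  qed
  have n2: "(\<Sum>e\<in>?Sb. edge_weight k e * norm (snd g e) powr \<alpha>) \<le> (\<Sum>e\<in>?Sb. M * ?Q * norm (snd g e))"
  proof (rule sum_mono)
    fix e assume e: "e \<in> ?Sb"
    then have eE: "e \<in> E" using g by (auto simp: ok_def)
    have le: "norm (snd g e) \<le> Sz g"
      using member_le_sum[of e ?Sb "\<lambda>e. norm (snd g e)"] fin e Sz1 by auto
    have "norm (snd g e) powr \<alpha> \<le> norm (snd g e) * ?Q" using e le a by (intro powr_split) auto
    moreover have "0 \<le> edge_weight k e" "edge_weight k e \<le> M" using ew_bounds[OF eE] by auto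
    ultimately have "edge_weight k e * norm (snd g e) powr \<alpha> \<le> M * (norm (snd g e) * ?Q)"
      by (intro mult_mono) auto
    then show "edge_weight k e * norm (snd g e) powr \<alpha> \<le> M * ?Q * norm (snd g e)" by (simp add: algebra_simps)
  qed
  have "normpow V E m k \<alpha> g \<le> (\<Sum>x\<in>?Sa. M * ?Q * \<bar>fst g x\<bar>) + (\<Sum>e\<in>?Sb. M * ?Q * norm (snd g e))"
    unfolding normpow_def sa sb using n1 n2 by simp
  also have "\<dots> = M * ?Q * Sz g" by (simp add: Sz_def sum_distrib_left distrib_left)
  also have "\<dots> \<le> M * ?Q * (Sz g + 1)" using M_pos Q by (intro mult_left_mono) auto
  also have "\<dots> = M * (Sz g + 1) powr \<alpha>"
  proof -
    have "(Sz g + 1) powr \<alpha> = ?Q * (Sz g + 1) powr 1" using powr_add[of "Sz g + 1" "\<alpha> - 1" 1] by simp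
    also have "\<dots> = ?Q * (Sz g + 1)" using Sz_nonneg[of g] by simp
    finally show ?thesis by simp
  qed
  finally show ?thesis .
qed

lemma fc_not_minf: "snd (fc j g \<omega> n) \<noteq> - \<infinity>"
proof (induction n arbitrary: j g)
  case 0 then show ?case by simp
next
  case (Suc n)
  have IH: "snd (fc (Suc j) g' \<omega> n) \<noteq> - \<infinity>" for g' by (rule Suc.IH)
  show ?case
  proof (cases "Ev g = {}")
    case True
    then have "snd (fc j g \<omega> (Suc n)) = \<infinity> + snd (fc (Suc j) g \<omega> n)"
      by (simp add: step_eq split_def Let_def)
    then show ?thesis using IH[of g] by (cases "snd (fc (Suc j) g \<omega> n)") auto
  next
    case False
    then obtain r g' where "snd (fc j g \<omega> (Suc n)) = ereal r + snd (fc (Suc j) g' \<omega> n)"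
      by (simp add: step_eq split_def Let_def)
    then show ?thesis using IH[of g'] by (cases "snd (fc (Suc j) g' \<omega> n)") auto
  qed
qed

lemma Bn_prod: "Bn \<theta> n s = (\<Prod>i<n. M * (s + real i * real (D + 2)) / (M * (s + real i * real (D + 2)) + \<theta>))"
proof (induction n arbitrary: s)
  case 0 then show ?case by simp
next
  case (Suc n)
  show ?case unfolding Bn.simps Suc.IH prod.lessThan_Suc_shift
    by (simp add: algebra_simps)
qed

end

context ips
begin

lemma main:
  assumes f: "ok f" and t: "0 \<le> t" and a: "1 \<le> \<alpha>"
  shows "expected_normpow V E m k V0 \<alpha> f t < \<infinity>"
proof -
  define s0 where "s0 = Sz f"
  define Kc where "Kc = real (D + 2)"
  define p where "p = nat \<lceil>\<alpha>\<rceil> + 2"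
  define c where "c = M * (s0 + 1) * Kc"
  define \<theta> where "\<theta> = c * real p"
  define w where "w n = M * (s0 + real n * Kc + 1) powr \<alpha> + 1" for n
  define C where "C = M * ((s0 + 1) * Kc) powr \<alpha> + 1"
  define cn where "cn n = exp (\<theta> * t) * w n" for n
  have s0: "0 \<le> s0" by (simp add: s0_def Sz_nonneg)
  have Kc: "2 \<le> Kc" by (simp add: Kc_def)
  have c: "0 < c" using M_pos s0 Kc by (simp add: c_def)
  have p2: "2 \<le> p" by (simp add: p_def)
  have th: "0 < \<theta>" using c p2 by (simp add: \<theta>_def)
  have w1: "1 \<le> w n" for n using M_pos by (simp add: w_def)
  have cn_nn: "0 \<le> cn n" for n using w1[of n] by (simp add: cn_def)
  have C1: "1 \<le> C" using M_pos by (simp add: C_def)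
  let ?F = "\<lambda>\<omega>. case ips_state m k V0 E f \<omega> t of None \<Rightarrow> \<infinity> | Some g \<Rightarrow> ennreal (normpow V E m k \<alpha> g)"
  let ?tau = "\<lambda>\<omega> n. snd (fc 0 f \<omega> n)"
  let ?T = "\<lambda>\<omega> n. ennreal (cn n) * ee \<theta> (snd (fc 0 f \<omega> n))"

  have Tge: "ennreal (w n) \<le> ?T \<omega> n" if tn: "?tau \<omega> n \<le> ereal t" for \<omega> n
  proof -
    have "?tau \<omega> n \<noteq> - \<infinity>" by (rule fc_not_minf)
    moreover have "?tau \<omega> n \<noteq> \<infinity>" using tn by auto
    ultimately obtain r where r: "?tau \<omega> n = ereal r" by (cases "?tau \<omega> n") auto
    with tn have rt: "r \<le> t" by simp
    have e1: "exp (\<theta> * t) * exp (- \<theta> * r) = exp (\<theta> * (t - r))" by (simp add: mult_exp_exp algebra_simps)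
    have e2: "1 \<le> exp (\<theta> * (t - r))" using th rt by simp
    have "w n = w n * 1" by simp
    also have "\<dots> \<le> w n * (exp (\<theta> * t) * exp (- \<theta> * r))"
      using e1 e2 w1[of n] by (intro mult_left_mono) auto
    also have "\<dots> = cn n * exp (- \<theta> * r)" by (simp add: cn_def)
    finally have "ennreal (w n) \<le> ennreal (cn n * exp (- \<theta> * r))" by (rule ennreal_leI)
    also have "\<dots> = ?T \<omega> n" using r cn_nn[of n] by (simp add: ee_def ennreal_mult)
    finally show ?thesis .
  qed

  have pw: "?F \<omega> \<le> (\<Sum>n. ?T \<omega> n)" for \<omega>
  proof -
    define N where "N = {n. ?tau \<omega> n \<le> ereal t}"
    have ips: "ips_state m k V0 E f \<omega> t = (if finite N then Some (fst (fc 0 f \<omega> (Max N))) else None)"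
      by (simp add: ips_state_def jchain_fc N_def Let_def)
    show ?thesis
    proof (cases "finite N")
      case True
      have "0 \<in> N" using t by (simp add: N_def zero_ereal_def)
      then have K: "Max N \<in> N" using True by (intro Max_in) auto
      define K where "K = Max N"
      have okK: "ok (fst (fc 0 f \<omega> K))" and SzK: "Sz (fst (fc 0 f \<omega> K)) \<le> s0 + real K * Kc"
        using fc_ok[OF f, of 0 \<omega> K] by (auto simp: s0_def Kc_def)
      have "normpow V E m k \<alpha> (fst (fc 0 f \<omega> K)) \<le> M * (Sz (fst (fc 0 f \<omega> K)) + 1) powr \<alpha>"
        by (rule normpow_le[OF okK a])
      also have "\<dots> \<le> M * (s0 + real K * Kc + 1) powr \<alpha>"
        using SzK Sz_nonneg[of "fst (fc 0 f \<omega> K)"] M_pos a by (intro mult_left_mono powr_mono2) auto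
      also have "\<dots> \<le> w K" by (simp add: w_def)
      finally have "ennreal (normpow V E m k \<alpha> (fst (fc 0 f \<omega> K))) \<le> ennreal (w K)" by (rule ennreal_leI)
      also have "\<dots> \<le> ?T \<omega> K" using K by (intro Tge) (simp add: N_def K_def)
      also have "\<dots> \<le> (\<Sum>n. ?T \<omega> n)"
      proof -
        have "sum (?T \<omega>) {K} \<le> suminf (?T \<omega>)" by (rule sum_le_suminf) auto
        then show ?thesis by simp
      qed
      finally show ?thesis using True ips by (simp add: K_def)
    next
      case False
      have "(\<Sum>n. ?T \<omega> n) = \<infinity>"
      proof (rule ccontr)
        assume "(\<Sum>n. ?T \<omega> n) \<noteq> \<infinity>"
        then have "(\<Sum>n. ?T \<omega> n) < top" by (simp add: less_top)
        then obtain q where q: "(\<Sum>n. ?T \<omega> n) < of_nat q" using ennreal_Ex_less_of_nat by blast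
        obtain S where S: "finite S" "card S = q" "S \<subseteq> N" using infinite_arbitrarily_large[OF False] by blast
        have "(of_nat q :: ennreal) = (\<Sum>n\<in>S. (1::ennreal))" using S by simp
        also have "\<dots> \<le> (\<Sum>n\<in>S. ?T \<omega> n)"
        proof (rule sum_mono)
          fix n assume "n \<in> S"
          then have "?tau \<omega> n \<le> ereal t" using S by (auto simp: N_def)
          then have "ennreal (w n) \<le> ?T \<omega> n" by (rule Tge)
          moreover have "(1::ennreal) \<le> ennreal (w n)" using ennreal_leI[OF w1[of n]] by simp
          ultimately show "1 \<le> ?T \<omega> n" by (rule order_trans[rotated])
        qed
        also have "\<dots> \<le> (\<Sum>n. ?T \<omega> n)" by (rule sum_le_suminf) (auto simp: S)
        finally show False using q by simp
      qed
      then show ?thesis using False ips by simp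
    qed
  qed

  have Gm_le: "?T \<omega> n \<le> ennreal (cn n * Gm \<theta> 0 f \<omega> n)" for \<omega> n
  proof -
    have "?T \<omega> n \<le> ennreal (cn n) * ennreal (Gm \<theta> 0 f \<omega> n)"
      by (intro mult_left_mono fc_Gm[OF f]) simp
    also have "\<dots> = ennreal (cn n * Gm \<theta> 0 f \<omega> n)"
      using cn_nn[of n] Gm_nonneg by (simp add: ennreal_mult)
    finally show ?thesis .
  qed
  have measG: "(\<lambda>\<omega>. ennreal (Gm \<theta> 0 f \<omega> n)) \<in> borel_measurable clock_space" for n
  proof -
    have "(\<lambda>\<omega>. Gm \<theta> 0 f \<omega> n) \<in> borel_measurable clock_space"
      unfolding clock_space_def by (rule Gm_meas[OF f]) simp
    then show ?thesis by (rule measurable_compose[OF _ measurable_ennreal])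
  qed
  have meas: "(\<lambda>\<omega>. ennreal (cn n * Gm \<theta> 0 f \<omega> n)) \<in> borel_measurable clock_space" for n
  proof -
    have "(\<lambda>\<omega>. cn n * Gm \<theta> 0 f \<omega> n) \<in> borel_measurable clock_space"
      unfolding clock_space_def by (intro borel_measurable_times borel_measurable_const Gm_meas[OF f]) simp
    then show ?thesis by (rule measurable_compose[OF _ measurable_ennreal])
  qed

  have Bnb: "Bn \<theta> n s0 \<le> fact p / real (n + 1) ^ p" for n
  proof -
    have "Bn \<theta> n s0 = (\<Prod>i<n. M * (s0 + real i * Kc) / (M * (s0 + real i * Kc) + \<theta>))"
      by (simp add: Bn_prod Kc_def)
    also have "\<dots> \<le> (\<Prod>i<n. real (i + 1) / real (i + 1 + p))"
    proof (rule prod_mono)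
      fix i assume "i \<in> {..<n}"
      define x where "x = M * (s0 + real i * Kc)"
      have x0: "0 \<le> x" using M_pos s0 Kc by (simp add: x_def)
      have b: "s0 + real i * Kc \<le> (s0 + 1) * Kc * real (i + 1)"
      proof -
        have "(s0 + 1) * Kc * real (i + 1) = s0 * Kc * real i + s0 * Kc + real i * Kc + Kc"
          by (simp add: algebra_simps)
        moreover have "0 \<le> s0 * Kc * real i" using s0 Kc by simp
        moreover have "s0 * 1 \<le> s0 * Kc" using s0 Kc by (intro mult_left_mono) auto
        ultimately show ?thesis using Kc by linarith
      qed
      have xle: "x \<le> c * real (i + 1)"
        using mult_left_mono[OF b, of M] M_pos by (simp add: x_def c_def mult.assoc)
      have "x / (x + \<theta>) \<le> (c * real (i + 1)) / (c * real (i + 1) + \<theta>)"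
        by (rule frac_mono[OF x0 xle th])
      also have "c * real (i + 1) + \<theta> = c * real (i + 1 + p)" by (simp add: \<theta>_def algebra_simps)
      also have "(c * real (i + 1)) / (c * real (i + 1 + p)) = real (i + 1) / real (i + 1 + p)"
        using c by simp
      finally show "0 \<le> M * (s0 + real i * Kc) / (M * (s0 + real i * Kc) + \<theta>) \<and>
          M * (s0 + real i * Kc) / (M * (s0 + real i * Kc) + \<theta>) \<le> real (i + 1) / real (i + 1 + p)"
        using x0 th by (simp add: x_def)
    qed
    also have "\<dots> \<le> fact p / real (n + 1) ^ p" by (rule prod_frac_bound)
    finally show ?thesis .
  qed

  have wb: "w n \<le> C * real (n + 1) ^ (p - 2)" for n
  proof -
    have b1: "s0 + real n * Kc + 1 \<le> ((s0 + 1) * Kc) * real (n + 1)"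
    proof -
      have "((s0 + 1) * Kc) * real (n + 1) = s0 * Kc * real n + s0 * Kc + real n * Kc + Kc"
        by (simp add: algebra_simps)
      moreover have "0 \<le> s0 * Kc * real n" using s0 Kc by simp
      moreover have "s0 * 1 \<le> s0 * Kc" using s0 Kc by (intro mult_left_mono) auto
      ultimately show ?thesis using Kc by linarith
    qed
    have ap: "\<alpha> \<le> real (p - 2)"
    proof -
      have "\<alpha> \<le> of_int \<lceil>\<alpha>\<rceil>" by (rule le_of_int_ceiling)
      also have "of_int \<lceil>\<alpha>\<rceil> = real (nat \<lceil>\<alpha>\<rceil>)" using a by simp
      finally show ?thesis by (simp add: p_def)
    qed
    have "(s0 + real n * Kc + 1) powr \<alpha> \<le> (((s0 + 1) * Kc) * real (n + 1)) powr \<alpha>"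
      using b1 s0 Kc a by (intro powr_mono2) auto
    also have "\<dots> = ((s0 + 1) * Kc) powr \<alpha> * real (n + 1) powr \<alpha>"
      using s0 Kc by (simp add: powr_mult)
    also have "\<dots> \<le> ((s0 + 1) * Kc) powr \<alpha> * real (n + 1) powr real (p - 2)"
      using ap by (intro mult_left_mono powr_mono) auto
    also have "real (n + 1) powr real (p - 2) = real (n + 1) ^ (p - 2)"
      by (rule powr_realpow) simp
    finally have X: "(s0 + real n * Kc + 1) powr \<alpha> \<le> ((s0 + 1) * Kc) powr \<alpha> * real (n + 1) ^ (p - 2)" .
    have one: "1 \<le> real (n + 1) ^ (p - 2)" by simp
    have "w n \<le> M * (((s0 + 1) * Kc) powr \<alpha> * real (n + 1) ^ (p - 2)) + real (n + 1) ^ (p - 2)"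
      unfolding w_def using X M_pos one by (intro add_mono mult_left_mono) auto
    also have "\<dots> = C * real (n + 1) ^ (p - 2)" by (simp add: C_def algebra_simps)
    finally show ?thesis .
  qed

  have termb: "cn n * Bn \<theta> n s0 \<le> exp (\<theta> * t) * C * fact p / real (n + 1) ^ 2" for n
  proof -
    have "cn n * Bn \<theta> n s0 \<le> (exp (\<theta> * t) * (C * real (n + 1) ^ (p - 2))) * (fact p / real (n + 1) ^ p)"
      unfolding cn_def using wb[of n] Bnb[of n] Bn_nonneg[OF th s0, of n] C1
      by (intro mult_mono mult_left_mono) auto
    also have "real (n + 1) ^ p = real (n + 1) ^ (p - 2) * real (n + 1) ^ 2"
      unfolding p_def by (simp only: power_add diff_add_inverse2)
    also have "(exp (\<theta> * t) * (C * real (n + 1) ^ (p - 2))) * (fact p / (real (n + 1) ^ (p - 2) * real (n + 1) ^ 2))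
        = exp (\<theta> * t) * C * fact p / real (n + 1) ^ 2"
      by (simp add: field_simps)
    finally show ?thesis .
  qed

  have summ: "summable (\<lambda>n. exp (\<theta> * t) * C * fact p / real (n + 1) ^ 2)"
  proof -
    have "summable (\<lambda>n. inverse (of_nat n ^ 2 :: real))" by (rule inverse_power_summable) simp
    then have "summable (\<lambda>n. inverse (of_nat (Suc n) ^ 2 :: real))" by (subst summable_Suc_iff)
    then have "summable (\<lambda>n. (exp (\<theta> * t) * C * fact p) * inverse (of_nat (Suc n) ^ 2 :: real))"
      by (rule summable_mult)
    then show ?thesis by (simp add: divide_inverse)
  qed

  have "expected_normpow V E m k V0 \<alpha> f t = (\<integral>\<^sup>+\<omega>. ?F \<omega> \<partial>clock_space)"
    unfolding expected_normpow_def ..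
  also have "\<dots> \<le> (\<integral>\<^sup>+\<omega>. (\<Sum>n. ennreal (cn n * Gm \<theta> 0 f \<omega> n)) \<partial>clock_space)"
  proof (rule nn_integral_mono)
    fix \<omega>
    have "(\<Sum>n. ?T \<omega> n) \<le> (\<Sum>n. ennreal (cn n * Gm \<theta> 0 f \<omega> n))"
      by (rule suminf_le[OF Gm_le summableI summableI])
    with pw[of \<omega>] show "?F \<omega> \<le> (\<Sum>n. ennreal (cn n * Gm \<theta> 0 f \<omega> n))" by (rule order_trans)
  qed
  also have "\<dots> = (\<Sum>n. \<integral>\<^sup>+\<omega>. ennreal (cn n * Gm \<theta> 0 f \<omega> n) \<partial>clock_space)"
    by (rule nn_integral_suminf) (rule meas)
  also have "\<dots> \<le> (\<Sum>n. ennreal (cn n * Bn \<theta> n s0))"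
  proof (rule suminf_le[OF _ summableI summableI])
    fix n
    have "(\<integral>\<^sup>+\<omega>. ennreal (cn n * Gm \<theta> 0 f \<omega> n) \<partial>clock_space)
        = (\<integral>\<^sup>+\<omega>. ennreal (cn n) * ennreal (Gm \<theta> 0 f \<omega> n) \<partial>clock_space)"
      by (intro nn_integral_cong ennreal_mult cn_nn Gm_nonneg)
    also have "\<dots> = ennreal (cn n) * (\<integral>\<^sup>+\<omega>. ennreal (Gm \<theta> 0 f \<omega> n) \<partial>clock_space)"
      by (rule nn_integral_cmult) (rule measG)
    also have "\<dots> \<le> ennreal (cn n) * ennreal (Bn \<theta> n s0)"
      using Gm_int[OF f th, of 0 n] unfolding s0_def by (rule mult_left_mono) simp
    also have "\<dots> = ennreal (cn n * Bn \<theta> n s0)"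
      by (rule ennreal_mult[symmetric, OF cn_nn Bn_nonneg[OF th s0]])
    finally show "(\<integral>\<^sup>+\<omega>. ennreal (cn n * Gm \<theta> 0 f \<omega> n) \<partial>clock_space) \<le> ennreal (cn n * Bn \<theta> n s0)" .
  qed
  also have "\<dots> \<le> (\<Sum>n. ennreal (exp (\<theta> * t) * C * fact p / real (n + 1) ^ 2))"
    by (rule suminf_le[OF _ summableI summableI]) (intro ennreal_leI termb)
  also have "\<dots> < \<infinity>"
  proof -
    have nn: "0 \<le> exp (\<theta> * t) * C * fact p / real (n + 1) ^ 2" for n
      using C1 by (intro divide_nonneg_pos mult_nonneg_nonneg) auto
    have "(\<Sum>n. ennreal (exp (\<theta> * t) * C * fact p / real (n + 1) ^ 2)) \<noteq> top"
      by (rule ennreal_suminf_neq_top[OF summ nn])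
    then show ?thesis by (simp add: less_top)
  qed
  finally show ?thesis .
qed

end

theorem theorem2p2:
  fixes V V0 V1 :: "'h::{real_inner, complete_space} set"
    and E :: "'h set set"
    and k :: "'h \<Rightarrow> 'h \<Rightarrow> real"
    and m :: "'h \<Rightarrow> real"
    and f :: "'h state"
    and t \<alpha> :: real
  assumes V_countable: "countable V"
    and E_edges: "E \<subseteq> {{x, y} | x y. x \<in> V \<and> y \<in> V \<and> x \<noteq> y}"
    and k_sym: "\<forall>x y. k x y = k y x"
    and k_nonneg: "\<forall>x y. 0 \<le> k x y"
    and k_zero: "\<forall>x y. {x, y} \<notin> E \<longrightarrow> k x y = 0"
    and m_pos: "\<forall>x\<in>V. 0 < m x"
    and deg_bounded: "\<exists>D::nat. \<forall>x\<in>V. finite {y. {x, y} \<in> E} \<and> card {y. {x, y} \<in> E} \<le> D"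
    and M_finite: "\<exists>M::real. (\<forall>x\<in>V. 1 / m x \<le> M) \<and> (\<forall>x y. {x, y} \<in> E \<longrightarrow> k x y \<le> M)"
    and partition: "V0 \<union> V1 = V" "V0 \<inter> V1 = {}"
    and t_nonneg: "0 \<le> t"
    and alpha_ge: "1 \<le> \<alpha>"
    and f_F0: "f \<in> F0 V E"
  shows "expected_normpow V E m k V0 \<alpha> f t < \<infinity>"
proof -
  obtain D :: nat where D: "\<forall>x\<in>V. finite {y. {x, y} \<in> E} \<and> card {y. {x, y} \<in> E} \<le> D"
    using deg_bounded by blast
  obtain M0 :: real where M0: "(\<forall>x\<in>V. 1 / m x \<le> M0) \<and> (\<forall>x y. {x, y} \<in> E \<longrightarrow> k x y \<le> M0)"
    using M_finite by blast
  define M where "M = max M0 1"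
  interpret I: ips V V0 E k m D M
    by unfold_locales (use E_edges k_nonneg m_pos D M0 partition in \<open>auto simp: M_def le_max_iff_disj\<close>)
  have okf: "I.ok f" using f_F0 by (cases f) (auto simp: F0_def I.ok_def)
  show ?thesis by (rule I.main[OF okf t_nonneg alpha_ge])
qed

end
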